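(* Assume $\|\hat F'(y)-\hat F'(x)\|_F\le L_{\hat F}\|y-x\|$ for all $x,y\in\mathcal F$. Suppose that for Scheme 1 there is $x^*\in\mathcal L(\hat f_1(x_0))$ with $\hat F(x^* )=0$ and $\sigma_{\min}(\hat F'(x^* ))\ge\varsigma>0$. (i) If $\varsigma>\frac{2L_{\hat F}}{\alpha}$ for some fixed $\alpha\in(0,1)$, then for every $k\in\mathbb Z_+$, every $\varepsilon_k\ge0$, whenever $\|x_k-x^*\|<\frac{\varsigma}{L_{\hat F}}-\frac2\alpha$ and $$0<\tau_k\le\frac{\Big(\big(\alpha(\varsigma-L_{\hat F}\|x_k-x^*\|)-\frac{3L_{\hat F}}{2}\big)^2-\frac{L_{\hat F}^2}{4}\Big)\|x_k-x^*\|^4}{\|x_k-x^*\|^2L_k+2\varepsilon_k},$$ we have $x_{k+1}\in\mathcal L(\hat f_1(x_0))$ and $$\|x_{k+1}-x^*\|\le\frac{\frac{3L_{\hat F}\|x_k-x^*\|^2}{2}+\sqrt{\|x_k-x^*\|^2\big(\tau_kL_k+\frac{L_{\hat F}^2\|x_k-x^*\|^2}{4}\big)+2\tau_k\varepsilon_k}}{\varsigma-L_{\hat F}\|x_k-x^*\|}\le\alpha\|x_k-x^*\|^2.$$ (ii) If no such $\alpha\in(0,1)$ exists, then in Scheme 1 with $\tau_k=c_1\|x_k-x^*\|^2$ ($c_1>0$) and $\varepsilon_k=c_2\|x_k-x^*\|^2$ ($c_2\ge0$), whenever $\|x_k-x^*\|\le\varsigma\big/\big(\frac{5L_{\hat F}}{2}+\sqrt{2c_1L_{\hat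 F}+\frac{L_{\hat F}^2}{4}+2c_1c_2}\big)$, the middle expression above is at most $\|x_k-x^*\|$ (so $\|x_{k+1}-x^*\|\le\|x_k-x^*\|$) and $x_{k+1}\in\mathcal L(\hat f_1(x_0))$.
   Context: Let $F:\mathbb R^n\to\mathbb R^m$ be smooth, $\hat F=\frac1{\sqrt m}F$ with Jacobian $\hat F'(x)$; Euclidean norms, spectral norm for matrices, $\|\cdot\|_F$ Frobenius norm; $\sigma_{\min}$ is the minimal singular value. $\hat f_1(x)=\|\hat F(x)\|$, $\phi(x,y)=\|\hat F(x)+\hat F'(x)(y-x)\|$, $\psi_{x,L,\tau}(y)=\frac\tau2+\frac{\phi(x,y)^2}{2\tau}+\frac L2\|y-x\|^2$, $T_{L,\tau}(x)=\arg\min_y\psi_{x,L,\tau}(y)$. $\mathcal F$ is closed convex with nonempty interior, $\mathcal L(v)=\{x:\hat f_1(x)\le v\}$, and $\mathcal L(\hat f_1(x_0))\subseteq\mathcal F$ with the generated sequence in $\mathcal F$. Scheme 1 (input $x_0$, a rule choosing $\varepsilon_k\ge0,\tau_k>0$, $L\in(0,L_{\hat F}]$, $L_0=L$): for $k=0,1,\dots$: choose $\tau_k,\varepsilon_k$; compute $x_{k+1}$ with $\psi_{x_k,L_k,\tau_k}(x_{k+1})-\psi_{x_k,L_k,\tau_k}(T_{L_k,\tau_k}(x_k))\le\varepsilon_k$ and $\hat f_1(x_k)\ge\psi_{x_k,L_k,\tau_k}(x_{k+1})$; if $\hat f_1(x_{k+1})>\psi_{x_k,L_k,\tau_k}(x_{k+1})$,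 set $L_k:=\min\{2L_k,2L_{\hat F}\}$ and repeat the iteration; otherwise $L_{k+1}=\max\{L_k/2,L\}$. *)

theory Defs
  imports "HOL-Analysis.Analysis"
begin

text \<open>F : R^n -> R^m is modelled as F :: real^'n => real^'m, with Jacobian
  J :: real^'n => real^'n^'m (an m x n matrix); m = CARD('m).\<close>

definition Fhat :: "(real^'n \<Rightarrow> real^'m) \<Rightarrow> real^'n \<Rightarrow> real^'m" where
  "Fhat F x = (1 / sqrt (real CARD('m))) *\<^sub>R F x"

definition Jhat :: "(real^'n \<Rightarrow> real^'n^'m) \<Rightarrow> real^'n \<Rightarrow> real^'n^'m" where
  "Jhat J x = (1 / sqrt (real CARD('m))) *\<^sub>R J x"

definition frob :: "real^'n^'m \<Rightarrow> real" where
  "frob A = sqrt (\<Sum>i\<in>UNIV. \<Sum>j\<in>UNIV. (A $ i $ j)\<^sup>2)"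

definition sigma_min :: "real^'n^'m \<Rightarrow> real" where
  "sigma_min A = Inf {norm (A *v v) | v. norm v = 1}"

definition fhat1 :: "(real^'n \<Rightarrow> real^'m) \<Rightarrow> real^'n \<Rightarrow> real" where
  "fhat1 F x = norm (Fhat F x)"

definition phi :: "(real^'n \<Rightarrow> real^'m) \<Rightarrow> (real^'n \<Rightarrow> real^'n^'m) \<Rightarrow> real^'n \<Rightarrow> real^'n \<Rightarrow> real" where
  "phi F J x y = norm (Fhat F x + Jhat J x *v (y - x))"

definition psi :: "(real^'n \<Rightarrow> real^'m) \<Rightarrow> (real^'n \<Rightarrow> real^'n^'m) \<Rightarrow> real^'n \<Rightarrow> real \<Rightarrow> real \<Rightarrow> real^'n \<Rightarrow> real" where
  "psi F J x L \<tau> y = \<tau> / 2 + (phi F J x y)\<^sup>2 / (2 * \<tau>) + L / 2 * (norm (y - x))\<^sup>2"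

definition Tmap :: "(real^'n \<Rightarrow> real^'m) \<Rightarrow> (real^'n \<Rightarrow> real^'n^'m) \<Rightarrow> real \<Rightarrow> real \<Rightarrow> real^'n \<Rightarrow> real^'n" where
  "Tmap F J L \<tau> x = (SOME y. \<forall>z. psi F J x L \<tau> y \<le> psi F J x L \<tau> z)"

definition level :: "(real^'n \<Rightarrow> real^'m) \<Rightarrow> real \<Rightarrow> (real^'n) set" where
  "level F v = {x. fhat1 F x \<le> v}"

definition admissible_step :: "(real^'n \<Rightarrow> real^'m) \<Rightarrow> (real^'n \<Rightarrow> real^'n^'m) \<Rightarrow> real^'n \<Rightarrow> real \<Rightarrow> real \<Rightarrow> real \<Rightarrow> real^'n \<Rightarrow> bool" where
  "admissible_step F J x L \<tau> \<epsilon> y \<longleftrightarrow>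
     psi F J x L \<tau> y - psi F J x L \<tau> (Tmap F J L \<tau> x) \<le> \<epsilon> \<and>
     fhat1 F x \<ge> psi F J x L \<tau> y"

text \<open>A run of Scheme 1.  x k are the iterates, Lk k is the value of L_k actually used
  in the accepted step k, tau k and eps k the parameters of that accepted step.
  Linit k is the value of L_k at the start of iteration k (L_0 = L,
  L_{k+1} = max (L_k/2) L); it is doubled (capped at 2 L_F) j times, each doubling
  caused by a rejected trial point.\<close>
definition scheme1 :: "(real^'n \<Rightarrow> real^'m) \<Rightarrow> (real^'n \<Rightarrow> real^'n^'m) \<Rightarrow> real \<Rightarrow> real \<Rightarrow>
    real^'n \<Rightarrow> (nat \<Rightarrow> real^'n) \<Rightarrow> (nat \<Rightarrow> real) \<Rightarrow> (nat \<Rightarrow> real) \<Rightarrow> (nat \<Rightarrow> real) \<Rightarrow> bool" where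
  "scheme1 F J LF L x0 x Lk \<tau> \<epsilon> \<longleftrightarrow>
     0 < L \<and> L \<le> LF \<and> x 0 = x0 \<and>
     (\<forall>k. 0 < \<tau> k \<and> 0 \<le> \<epsilon> k \<and>
        (let Linit = (if k = 0 then L else max (Lk (k - 1) / 2) L);
             dbl = (\<lambda>t. min (2 * t) (2 * LF))
         in \<exists>j. Lk k = (dbl ^^ j) Linit \<and>
              (\<forall>i<j. \<exists>y \<tau>' \<epsilon>'. 0 < \<tau>' \<and> 0 \<le> \<epsilon>' \<and>
                  admissible_step F J (x k) ((dbl ^^ i) Linit) \<tau>' \<epsilon>' y \<and>
                  fhat1 F y > psi F J (x k) ((dbl ^^ i) Linit) \<tau>' y)) \<and>
        admissible_step F J (x k) (Lk k) (\<tau> k) (\<epsilon> k) (x (Suc k)) \<and>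
        fhat1 F (x (Suc k)) \<le> psi F J (x k) (Lk k) (\<tau> k) (x (Suc k)))"

definition mid_bound :: "real \<Rightarrow> real \<Rightarrow> real \<Rightarrow> real \<Rightarrow> real \<Rightarrow> real \<Rightarrow> real" where
  "mid_bound LF \<sigma> r Lk \<tau> \<epsilon> =
     (3 * LF * r\<^sup>2 / 2 + sqrt (r\<^sup>2 * (\<tau> * Lk + LF\<^sup>2 * r\<^sup>2 / 4) + 2 * \<tau> * \<epsilon>)) / (\<sigma> - LF * r)"

end

theory Submission
  imports Defs
begin

lemma frob_bound: "norm (A *v v) \<le> frob A * norm v"
proof -
  have "(norm (A *v v))\<^sup>2 = (\<Sum>i\<in>UNIV. (A $ i \<bullet> v)\<^sup>2)"
    by (simp only: power2_norm_eq_inner inner_vec_def matrix_vector_mul_component) (simp add: power2_eq_square)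
  also have "\<dots> \<le> (\<Sum>i\<in>UNIV. (A $ i \<bullet> A $ i) * (v \<bullet> v))"
    by (rule sum_mono) (rule Cauchy_Schwarz_ineq)
  also have "\<dots> = (\<Sum>i\<in>UNIV. \<Sum>j\<in>UNIV. (A $ i $ j)\<^sup>2) * (v \<bullet> v)"
    by (simp add: sum_distrib_right inner_vec_def power2_eq_square)
  also have "\<dots> = (\<Sum>i\<in>UNIV. \<Sum>j\<in>UNIV. (A $ i $ j)\<^sup>2) * (norm v)\<^sup>2"
    by (simp add: power2_norm_eq_inner)
  also have "\<dots> = (frob A * norm v)\<^sup>2"
    by (simp add: frob_def power_mult_distrib sum_nonneg)
  finally have "(norm (A *v v))\<^sup>2 \<le> (frob A * norm v)\<^sup>2" .
  moreover have "0 \<le> frob A * norm v" by (simp add: frob_def sum_nonneg)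
  ultimately show ?thesis by (rule power2_le_imp_le)
qed

lemma sigma_bound:
  assumes "sigma_min A \<ge> s"
  shows "s * norm v \<le> norm (A *v v)"
proof (cases "v = 0")
  case True then show ?thesis by simp
next
  case False
  let ?u = "(1 / norm v) *\<^sub>R v"
  have nu: "norm ?u = 1" using False by simp
  have "sigma_min A \<le> norm (A *v ?u)"
    unfolding sigma_min_def
    by (rule cInf_lower) (use nu in \<open>auto intro: bdd_belowI[where m=0]\<close>)
  also have "\<dots> = norm (A *v v) / norm v"
    by (simp add: matrix_vector_mult_scaleR)
  finally have "s \<le> norm (A *v v) / norm v" using assms by linarith
  then show ?thesis using False by (simp add: field_simps)
qed

lemma mvs: "(c *\<^sub>R A) *v v = c *\<^sub>R (A *v (v::real^'n))"
  by (simp add: matrix_vector_mult_def vec_eq_iff sum_distrib_left algebra_simps)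

lemma Fhat_deriv:
  assumes deriv: "\<And>z. (F has_derivative (\<lambda>h. J z *v h)) (at z)"
  shows "((\<lambda>t. Fhat F (x + t *\<^sub>R d) \<bullet> w) has_real_derivative ((Jhat J (x + t *\<^sub>R d) *v d) \<bullet> w)) (at t)"
proof -
  let ?c = "1 / sqrt (real CARD('b))"
  have g: "((\<lambda>t. x + t *\<^sub>R d) has_derivative (\<lambda>h. h *\<^sub>R d)) (at t)"
    by (auto intro!: derivative_eq_intros)
  have "((\<lambda>t. F (x + t *\<^sub>R d)) has_derivative (\<lambda>h. J (x + t *\<^sub>R d) *v (h *\<^sub>R d))) (at t)"
    using has_derivative_compose[OF g deriv] by simp
  moreover have bl: "bounded_linear (\<lambda>v. (?c *\<^sub>R v) \<bullet> w)"
    by (rule bounded_linear_compose[OF bounded_linear_inner_left bounded_linear_scaleR_right])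
  ultimately have "((\<lambda>t. (?c *\<^sub>R F (x + t *\<^sub>R d)) \<bullet> w) has_derivative (\<lambda>h. (?c *\<^sub>R (J (x + t *\<^sub>R d) *v (h *\<^sub>R d))) \<bullet> w)) (at t)"
    using bounded_linear.has_derivative[OF bl] by blast
  moreover have "(\<lambda>h. (?c *\<^sub>R (J (x + t *\<^sub>R d) *v (h *\<^sub>R d))) \<bullet> w) = (\<lambda>h. ((Jhat J (x + t *\<^sub>R d) *v d) \<bullet> w) * h)"
    by (rule ext) (simp add: Jhat_def mvs matrix_vector_mult_scaleR del: scaleR_matrix_vector_assoc)
  ultimately show ?thesis
    unfolding has_field_derivative_def Fhat_def by (simp add: Fhat_def)
qed

lemma taylor:
  assumes deriv: "\<And>z. (F has_derivative (\<lambda>h. J z *v h)) (at z)"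
    and conv: "convex S" and xS: "x \<in> S" and yS: "y \<in> S" and LF: "0 \<le> LF"
    and lip: "\<And>u v. u \<in> S \<Longrightarrow> v \<in> S \<Longrightarrow> frob (Jhat J v - Jhat J u) \<le> LF * norm (v - u)"
  shows "norm (Fhat F y - Fhat F x - Jhat J x *v (y - x)) \<le> LF / 2 * (norm (y - x))\<^sup>2"
proof -
  define d where "d = y - x"
  define w where "w = Fhat F y - Fhat F x - Jhat J x *v d"
  define r where "r = norm d"
  define k where "k = (\<lambda>t. Fhat F (x + t *\<^sub>R d) \<bullet> w - t * ((Jhat J x *v d) \<bullet> w) - LF / 2 * r\<^sup>2 * norm w * t\<^sup>2)"
  have "k 1 \<le> k 0"
  proof (rule DERIV_nonpos_imp_nonincreasing[of 0 1 k])
    fix t :: real assume t0: "0 \<le> t" and t1: "t \<le> 1"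
    let ?D = "(Jhat J (x + t *\<^sub>R d) *v d) \<bullet> w - (Jhat J x *v d) \<bullet> w - LF / 2 * r\<^sup>2 * norm w * (2 * t)"
    have "(k has_real_derivative ?D) (at t)"
      unfolding k_def
      by (auto intro!: derivative_eq_intros Fhat_deriv[OF deriv])
    moreover have "?D \<le> 0"
    proof -
      have zS: "x + t *\<^sub>R d \<in> S"
        using convexD[OF conv xS yS, of "1 - t" t] t0 t1
        by (simp add: d_def algebra_simps)
      have "(Jhat J (x + t *\<^sub>R d) *v d) \<bullet> w - (Jhat J x *v d) \<bullet> w
            = ((Jhat J (x + t *\<^sub>R d) - Jhat J x) *v d) \<bullet> w"
        by (simp add: matrix_vector_mult_diff_rdistrib inner_diff_left)
      also have "\<dots> \<le> norm ((Jhat J (x + t *\<^sub>R d) - Jhat J x) *v d) * norm w"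
        by (rule norm_cauchy_schwarz)
      also have "\<dots> \<le> (frob (Jhat J (x + t *\<^sub>R d) - Jhat J x) * r) * norm w"
        using frob_bound[of "Jhat J (x + t *\<^sub>R d) - Jhat J x" d]
        by (intro mult_right_mono) (auto simp: r_def)
      also have "\<dots> \<le> ((LF * (t * r)) * r) * norm w"
        using lip[OF xS zS] t0
        by (intro mult_right_mono) (auto simp: r_def)
      finally show ?thesis by (simp add: power2_eq_square algebra_simps)
    qed
    ultimately show "\<exists>y. (k has_real_derivative y) (at t) \<and> y \<le> 0" by blast
  qed simp
  then have "w \<bullet> w \<le> LF / 2 * r\<^sup>2 * norm w"
    by (simp add: k_def w_def d_def inner_diff_left algebra_simps)
  then have "norm w * norm w \<le> (LF / 2 * r\<^sup>2) * norm w"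
    by (simp add: power2_eq_square[symmetric] power2_norm_eq_inner)
  then have "norm w \<le> LF / 2 * r\<^sup>2"
    using LF by (cases "norm w = 0") (auto simp: mult_le_cancel_right)
  then show ?thesis by (simp add: w_def r_def d_def)
qed

lemma psi_min:
  assumes L: "0 < L" and tau: "0 < \<tau>"
  shows "psi F J x L \<tau> (Tmap F J L \<tau> x) \<le> psi F J x L \<tau> z"
proof -
  let ?P = "psi F J x L \<tau>"
  have Pnn: "L / 2 * (norm (y - x))\<^sup>2 \<le> ?P y" for y
    unfolding psi_def using tau by (auto intro!: add_nonneg_nonneg)
  have Px: "0 \<le> ?P x" using Pnn[of x] by simp
  define R where "R = sqrt (2 * ?P x / L) + 1"
  have cont: "continuous_on (cball x R) ?P"
    unfolding psi_def phi_def
    by (intro continuous_intros matrix_vector_mult_linear_continuous_on[THEN continuous_on_compose2]) (use tau in auto)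
  have "x \<in> cball x R" unfolding R_def using Px L by (simp add: add_nonneg_nonneg)
  then obtain m where mK: "m \<in> cball x R" and mmin: "\<forall>y\<in>cball x R. ?P m \<le> ?P y"
    using continuous_attains_inf[OF compact_cball _ cont] by blast
  have "\<forall>z. ?P m \<le> ?P z"
  proof
    fix z
    show "?P m \<le> ?P z"
    proof (cases "z \<in> cball x R")
      case True then show ?thesis using mmin by blast
    next
      case False
      then have zR: "R < norm (z - x)" by (simp add: dist_norm norm_minus_commute)
      have R0: "sqrt (2 * ?P x / L) \<le> R" unfolding R_def by simp
      have "2 * ?P x / L = (sqrt (2 * ?P x / L))\<^sup>2" using Px L by simp
      also have "\<dots> \<le> (norm (z - x))\<^sup>2"
        using R0 zR Px L by (intro power_mono) auto
      finally have "?P x \<le> L / 2 * (norm (z - x))\<^sup>2" using L by (simp add: field_simps)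
      also have "\<dots> \<le> ?P z" by (rule Pnn)
      moreover have "?P m \<le> ?P x" using mmin \<open>x \<in> cball x R\<close> by blast
      ultimately show ?thesis by linarith
    qed
  qed
  then have "\<exists>y. \<forall>z. ?P y \<le> ?P z" by blast
  from someI_ex[OF this] show ?thesis unfolding Tmap_def by blast
qed

lemma step_est:
  assumes deriv: "\<And>z. (F has_derivative (\<lambda>h. J z *v h)) (at z)"
    and conv: "convex S" and xS: "x \<in> S" and xsS: "xs \<in> S" and LF: "0 \<le> LF"
    and lip: "\<And>u v. u \<in> S \<Longrightarrow> v \<in> S \<Longrightarrow> frob (Jhat J v - Jhat J u) \<le> LF * norm (v - u)"
    and xs_zero: "Fhat F xs = 0" and sig_min: "sigma_min (Jhat J xs) \<ge> \<sigma>"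
    and L: "0 < L" and tau: "0 < \<tau>"
    and adm: "psi F J x L \<tau> y - psi F J x L \<tau> (Tmap F J L \<tau> x) \<le> \<epsilon>"
    and D: "LF * norm (x - xs) < \<sigma>"
  shows "norm (y - xs) \<le> mid_bound LF \<sigma> (norm (x - xs)) L \<tau> \<epsilon>"
proof -
  define r where "r = norm (x - xs)"
  define p where "p = phi F J x xs"
  define q where "q = phi F J x y"
  define S where "S = r\<^sup>2 * (\<tau> * L + LF\<^sup>2 * r\<^sup>2 / 4) + 2 * \<tau> * \<epsilon>"
  have "norm (Fhat F xs - Fhat F x - Jhat J x *v (xs - x)) \<le> LF / 2 * (norm (xs - x))\<^sup>2"
    by (rule taylor[OF deriv conv xS xsS LF lip])
  moreover have "Fhat F xs - Fhat F x - Jhat J x *v (xs - x) = - (Fhat F x + Jhat J x *v (xs - x))"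
    using xs_zero by simp
  ultimately have "norm (- (Fhat F x + Jhat J x *v (xs - x))) \<le> LF / 2 * (norm (xs - x))\<^sup>2"
    by metis
  then have p: "p \<le> LF / 2 * r\<^sup>2"
    unfolding p_def phi_def r_def by (metis norm_minus_cancel norm_minus_commute)
  have p0: "0 \<le> p" by (simp add: p_def phi_def)
  have "psi F J x L \<tau> y \<le> psi F J x L \<tau> xs + \<epsilon>"
    using adm psi_min[OF L tau, of F J x xs] by linarith
  then have "\<tau> / 2 + q\<^sup>2 / (2 * \<tau>) + L / 2 * (norm (y - x))\<^sup>2 \<le> \<tau> / 2 + p\<^sup>2 / (2 * \<tau>) + L / 2 * r\<^sup>2 + \<epsilon>"
    by (simp add: psi_def p_def q_def r_def norm_minus_commute)
  moreover have "0 \<le> L / 2 * (norm (y - x))\<^sup>2" using L by simp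
  ultimately have "q\<^sup>2 / (2 * \<tau>) \<le> p\<^sup>2 / (2 * \<tau>) + L / 2 * r\<^sup>2 + \<epsilon>" by linarith
  then have "q\<^sup>2 \<le> p\<^sup>2 + \<tau> * L * r\<^sup>2 + 2 * \<tau> * \<epsilon>"
    using tau by (simp add: field_simps)
  moreover have "p\<^sup>2 \<le> (LF / 2 * r\<^sup>2)\<^sup>2" using p p0 by (intro power_mono) auto
  ultimately have "q\<^sup>2 \<le> S" by (simp add: S_def power2_eq_square algebra_simps)
  then have qS: "q \<le> sqrt S" by (simp add: real_le_rsqrt)
  let ?e = "y - xs"
  have "\<sigma> * norm ?e \<le> norm (Jhat J xs *v ?e)" by (rule sigma_bound[OF sig_min])
  also have "Jhat J xs *v ?e = Jhat J x *v ?e + (Jhat J xs - Jhat J x) *v ?e"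
    by (simp add: matrix_vector_mult_diff_rdistrib)
  also have "norm \<dots> \<le> norm (Jhat J x *v ?e) + norm ((Jhat J xs - Jhat J x) *v ?e)"
    by (rule norm_triangle_ineq)
  also have "norm ((Jhat J xs - Jhat J x) *v ?e) \<le> LF * r * norm ?e"
  proof -
    have "norm ((Jhat J xs - Jhat J x) *v ?e) \<le> frob (Jhat J xs - Jhat J x) * norm ?e"
      by (rule frob_bound)
    also have "\<dots> \<le> LF * r * norm ?e"
      using lip[OF xS xsS] by (intro mult_right_mono) (auto simp: r_def norm_minus_commute)
    finally show ?thesis .
  qed
  also have "Jhat J x *v ?e = (Fhat F x + Jhat J x *v (y - x)) - (Fhat F x + Jhat J x *v (xs - x))"
    by (simp add: matrix_vector_mult_diff_distrib)
  also have "norm \<dots> \<le> q + p"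
    unfolding q_def p_def phi_def by (rule norm_triangle_ineq4)
  finally have "\<sigma> * norm ?e \<le> q + p + LF * r * norm ?e" by simp
  then have "(\<sigma> - LF * r) * norm ?e \<le> q + p" by (simp add: algebra_simps)
  also have "\<dots> \<le> 3 * LF * r\<^sup>2 / 2 + sqrt S"
  proof -
    have "0 \<le> LF * r\<^sup>2" using LF by simp
    then show ?thesis using qS p by linarith
  qed
  finally have E: "norm ?e * (\<sigma> - LF * r) \<le> 3 * LF * r\<^sup>2 / 2 + sqrt S" by (simp add: mult.commute)
  have "0 < \<sigma> - LF * r" using D r_def by simp
  then have "norm ?e \<le> (3 * LF * r\<^sup>2 / 2 + sqrt S) / (\<sigma> - LF * r)"
    using E by (simp add: pos_le_divide_eq)
  then show ?thesis
    unfolding mid_bound_def S_def r_def .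
qed

lemma dbl_iter:
  assumes "0 < t" "t \<le> 2 * LF" "0 < (LF::real)"
  shows "0 < ((\<lambda>t. min (2 * t) (2 * LF)) ^^ j) t \<and> ((\<lambda>t. min (2 * t) (2 * LF)) ^^ j) t \<le> 2 * LF"
  using assms by (induction j) auto

lemma scheme_facts:
  assumes scheme: "scheme1 F J LF L x0 x Lk \<tau> \<epsilon>"
  shows "0 < Lk k \<and> Lk k \<le> 2 * LF"
proof -
  have ex: "\<exists>j. Lk k = ((\<lambda>t. min (2 * t) (2 * LF)) ^^ j) (if k = 0 then L else max (Lk (k - 1) / 2) L)" for k
    using scheme unfolding scheme1_def Let_def by blast
  show ?thesis
proof (induction k)
  case 0
  from scheme have L: "0 < L" "L \<le> LF" unfolding scheme1_def by auto
  from ex[of 0] obtain j where "Lk 0 = ((\<lambda>t. min (2 * t) (2 * LF)) ^^ j) L"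
    by auto
  then show ?case using dbl_iter[of L LF j] L by auto
next
  case (Suc k)
  from scheme have L: "0 < L" "L \<le> LF" unfolding scheme1_def by auto
  from ex[of "Suc k"] obtain j where "Lk (Suc k) = ((\<lambda>t. min (2 * t) (2 * LF)) ^^ j) (max (Lk k / 2) L)"
    by auto
  moreover have "0 < max (Lk k / 2) L" "max (Lk k / 2) L \<le> 2 * LF" using Suc L by auto
  ultimately show ?case using dbl_iter[of "max (Lk k / 2) L" LF j] L by auto
qed
qed

lemma level_facts:
  assumes scheme: "scheme1 F J LF L x0 x Lk \<tau> \<epsilon>"
  shows "fhat1 F (x (Suc k)) \<le> fhat1 F (x k)" and "fhat1 F (x k) \<le> fhat1 F x0"
proof -
  have *: "fhat1 F (x (Suc k)) \<le> fhat1 F (x k)" for k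
  proof -
    from scheme have "admissible_step F J (x k) (Lk k) (\<tau> k) (\<epsilon> k) (x (Suc k))"
      "fhat1 F (x (Suc k)) \<le> psi F J (x k) (Lk k) (\<tau> k) (x (Suc k))"
      unfolding scheme1_def by auto
    then show ?thesis unfolding admissible_step_def by linarith
  qed
  show "fhat1 F (x (Suc k)) \<le> fhat1 F (x k)" by (rule *)
  show "fhat1 F (x k) \<le> fhat1 F x0"
  proof (induction k)
    case 0 then show ?case using scheme unfolding scheme1_def by simp
  next
    case (Suc k) then show ?case using *[of k] by linarith
  qed
qed

theorem theorem2:
  fixes F :: "real^'n \<Rightarrow> real^'m" and J :: "real^'n \<Rightarrow> real^'n^'m"
    and \<F> :: "(real^'n) set"
    and LF L \<sigma> :: real and x0 xs :: "real^'n"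
    and x :: "nat \<Rightarrow> real^'n" and Lk \<tau> \<epsilon> :: "nat \<Rightarrow> real"
  assumes deriv: "\<And>z. (F has_derivative (\<lambda>h. J z *v h)) (at z)"
    and F_closed: "closed \<F>" and F_convex: "convex \<F>" and F_int: "interior \<F> \<noteq> {}"
    and lev_sub: "level F (fhat1 F x0) \<subseteq> \<F>"
    and seq_in: "\<And>k. x k \<in> \<F>"
    and lip: "\<And>u v. u \<in> \<F> \<Longrightarrow> v \<in> \<F> \<Longrightarrow> frob (Jhat J v - Jhat J u) \<le> LF * norm (v - u)"
    and scheme: "scheme1 F J LF L x0 x Lk \<tau> \<epsilon>"
    and xs_lev: "xs \<in> level F (fhat1 F x0)"
    and xs_zero: "Fhat F xs = 0"
    and sig_pos: "0 < \<sigma>"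
    and sig_min: "sigma_min (Jhat J xs) \<ge> \<sigma>"
  shows
    "(\<forall>\<alpha>. 0 < \<alpha> \<and> \<alpha> < 1 \<and> \<sigma> > 2 * LF / \<alpha> \<longrightarrow>
       (\<forall>k. norm (x k - xs) < \<sigma> / LF - 2 / \<alpha> \<and>
            0 < \<tau> k \<and> \<tau> k \<le> (((\<alpha> * (\<sigma> - LF * norm (x k - xs)) - 3 * LF / 2)\<^sup>2 - LF\<^sup>2 / 4)
                      * (norm (x k - xs)) ^ 4)
                   / ((norm (x k - xs))\<^sup>2 * Lk k + 2 * \<epsilon> k)
          \<longrightarrow> x (Suc k) \<in> level F (fhat1 F x0) \<and>
              norm (x (Suc k) - xs) \<le> mid_bound LF \<sigma> (norm (x k - xs)) (Lk k) (\<tau> k) (\<epsilon> k) \<and>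
              mid_bound LF \<sigma> (norm (x k - xs)) (Lk k) (\<tau> k) (\<epsilon> k) \<le> \<alpha> * (norm (x k - xs))\<^sup>2))
     \<and>
     (\<not> (\<exists>\<alpha>. 0 < \<alpha> \<and> \<alpha> < 1 \<and> \<sigma> > 2 * LF / \<alpha>) \<longrightarrow>
       (\<forall>c1 c2. 0 < c1 \<and> 0 \<le> c2 \<and>
          (\<forall>k. \<tau> k = c1 * (norm (x k - xs))\<^sup>2 \<and> \<epsilon> k = c2 * (norm (x k - xs))\<^sup>2) \<longrightarrow>
          (\<forall>k. norm (x k - xs) \<le> \<sigma> / (5 * LF / 2 + sqrt (2 * c1 * LF + LF\<^sup>2 / 4 + 2 * c1 * c2))
             \<longrightarrow> norm (x (Suc k) - xs) \<le> mid_bound LF \<sigma> (norm (x k - xs)) (Lk k) (\<tau> k) (\<epsilon> k) \<and>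
                 mid_bound LF \<sigma> (norm (x k - xs)) (Lk k) (\<tau> k) (\<epsilon> k) \<le> norm (x k - xs) \<and>
                 norm (x (Suc k) - xs) \<le> norm (x k - xs) \<and>
                 x (Suc k) \<in> level F (fhat1 F x0))))"
proof -
  have L: "0 < L" "L \<le> LF" using scheme unfolding scheme1_def by auto
  have LF: "0 < LF" using L by linarith
  have xsS: "xs \<in> \<F>" using xs_lev lev_sub by blast
  have Lkb: "0 < Lk k \<and> Lk k \<le> 2 * LF" for k by (rule scheme_facts[OF scheme])
  have tau: "0 < \<tau> k" and eps: "0 \<le> \<epsilon> k" for k using scheme unfolding scheme1_def by auto
  have adm: "psi F J (x k) (Lk k) (\<tau> k) (x (Suc k)) - psi F J (x k) (Lk k) (\<tau> k) (Tmap F J (Lk k) (\<tau> k) (x k)) \<le> \<epsilon> k" for k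
    using scheme unfolding scheme1_def admissible_step_def by auto
  have lev: "x (Suc k) \<in> level F (fhat1 F x0)" for k
    using level_facts(2)[OF scheme, of "Suc k"] unfolding level_def by simp
  have est: "norm (x (Suc k) - xs) \<le> mid_bound LF \<sigma> (norm (x k - xs)) (Lk k) (\<tau> k) (\<epsilon> k)"
    if "LF * norm (x k - xs) < \<sigma>" for k
    using step_est[OF deriv F_convex seq_in xsS _ lip xs_zero sig_min _ tau adm that] LF Lkb[of k] by auto
  show ?thesis
  proof (intro conjI allI impI)
    fix \<alpha> :: real and k
    assume A: "0 < \<alpha> \<and> \<alpha> < 1 \<and> \<sigma> > 2 * LF / \<alpha>"
    define r where "r = norm (x k - xs)"
    define D where "D = \<sigma> - LF * r"
    assume B: "norm (x k - xs) < \<sigma> / LF - 2 / \<alpha> \<and>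
            0 < \<tau> k \<and> \<tau> k \<le> (((\<alpha> * (\<sigma> - LF * norm (x k - xs)) - 3 * LF / 2)\<^sup>2 - LF\<^sup>2 / 4)
                      * (norm (x k - xs)) ^ 4)
                   / ((norm (x k - xs))\<^sup>2 * Lk k + 2 * \<epsilon> k)"
    then have r1: "r < \<sigma> / LF - 2 / \<alpha>" and tb: "\<tau> k \<le> (((\<alpha> * D - 3 * LF / 2)\<^sup>2 - LF\<^sup>2 / 4) * r ^ 4) / (r\<^sup>2 * Lk k + 2 * \<epsilon> k)"
      by (simp_all add: r_def D_def)
    have "LF * r < LF * (\<sigma> / LF - 2 / \<alpha>)" using r1 LF by simp
    moreover have "LF * (\<sigma> / LF - 2 / \<alpha>) = \<sigma> - 2 * LF / \<alpha>" using LF by (simp add: field_simps)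
    ultimately have r2: "LF * r < \<sigma> - 2 * LF / \<alpha>" by linarith
    have aD: "2 * LF < \<alpha> * D"
    proof -
      have "2 * LF / \<alpha> < D" using r2 D_def by simp
      then show ?thesis using A by (simp add: field_simps)
    qed
    have "0 < \<alpha> * D" using aD LF by linarith
    then have D0: "0 < D" using A zero_less_mult_pos by blast
    then have lrs: "LF * norm (x k - xs) < \<sigma>" by (simp add: D_def r_def)
    show "x (Suc k) \<in> level F (fhat1 F x0)" by (rule lev)
    show "norm (x (Suc k) - xs) \<le> mid_bound LF \<sigma> (norm (x k - xs)) (Lk k) (\<tau> k) (\<epsilon> k)"
      by (rule est[OF lrs])
    define Den where "Den = r\<^sup>2 * Lk k + 2 * \<epsilon> k"
    define N where "N = ((\<alpha> * D - 3 * LF / 2)\<^sup>2 - LF\<^sup>2 / 4) * r ^ 4"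
    have Den0: "0 \<le> Den" unfolding Den_def using Lkb[of k] eps[of k] by simp
    have "Den \<noteq> 0"
    proof
      assume "Den = 0"
      then have "\<tau> k \<le> 0" using tb by (simp add: Den_def)
      then show False using tau[of k] by simp
    qed
    then have DenP: "0 < Den" using Den0 by simp
    have tN: "\<tau> k * Den \<le> N" using tb DenP by (simp add: Den_def N_def pos_le_divide_eq)
    define S where "S = r\<^sup>2 * (\<tau> k * Lk k + LF\<^sup>2 * r\<^sup>2 / 4) + 2 * \<tau> k * \<epsilon> k"
    have "S = \<tau> k * Den + LF\<^sup>2 * r ^ 4 / 4"
      by (simp add: S_def Den_def algebra_simps power2_eq_square power4_eq_xxxx)
    also have "\<dots> \<le> ((\<alpha> * D - 3 * LF / 2) * r\<^sup>2)\<^sup>2"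
      using tN by (simp add: N_def algebra_simps power2_eq_square power4_eq_xxxx)
    finally have "sqrt S \<le> sqrt (((\<alpha> * D - 3 * LF / 2) * r\<^sup>2)\<^sup>2)" by (rule real_sqrt_le_mono)
    also have "\<dots> = (\<alpha> * D - 3 * LF / 2) * r\<^sup>2"
      using aD LF by (simp add: real_sqrt_abs)
    finally have sS: "sqrt S \<le> (\<alpha> * D - 3 * LF / 2) * r\<^sup>2" .
    have "3 * LF * r\<^sup>2 / 2 + sqrt S \<le> (\<alpha> * r\<^sup>2) * D"
      using sS by (simp add: algebra_simps)
    then have "(3 * LF * r\<^sup>2 / 2 + sqrt S) / D \<le> \<alpha> * r\<^sup>2"
      using D0 by (simp add: pos_divide_le_eq)
    then show "mid_bound LF \<sigma> (norm (x k - xs)) (Lk k) (\<tau> k) (\<epsilon> k) \<le> \<alpha> * (norm (x k - xs))\<^sup>2"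
      unfolding mid_bound_def S_def D_def r_def .
  next
    fix c1 c2 :: real and k
    assume "\<not> (\<exists>\<alpha>. 0 < \<alpha> \<and> \<alpha> < 1 \<and> \<sigma> > 2 * LF / \<alpha>)"
    assume C: "0 < c1 \<and> 0 \<le> c2 \<and> (\<forall>k. \<tau> k = c1 * (norm (x k - xs))\<^sup>2 \<and> \<epsilon> k = c2 * (norm (x k - xs))\<^sup>2)"
    define r where "r = norm (x k - xs)"
    define Q where "Q = 2 * c1 * LF + LF\<^sup>2 / 4 + 2 * c1 * c2"
    define B where "B = 5 * LF / 2 + sqrt Q"
    assume "norm (x k - xs) \<le> \<sigma> / (5 * LF / 2 + sqrt (2 * c1 * LF + LF\<^sup>2 / 4 + 2 * c1 * c2))"
    then have rB: "r \<le> \<sigma> / B" by (simp add: r_def B_def Q_def)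
    have Q0: "0 \<le> Q" using C LF unfolding Q_def by simp
    have "0 \<le> sqrt Q" using Q0 by simp
    then have B0: "LF < B" unfolding B_def using LF by linarith
    have r0: "0 \<le> r" by (simp add: r_def)
    have rB2: "r * B \<le> \<sigma>" using rB B0 LF by (simp add: pos_le_divide_eq)
    have "LF * r < \<sigma>"
    proof (cases "r = 0")
      case True then show ?thesis using sig_pos by simp
    next
      case False
      then have "LF * r < B * r" using B0 r0 by simp
      then show ?thesis using rB2 by (simp add: mult.commute)
    qed
    then have lrs: "LF * norm (x k - xs) < \<sigma>" and D0: "0 < \<sigma> - LF * r" by (simp_all add: r_def)
    have ek: "norm (x (Suc k) - xs) \<le> mid_bound LF \<sigma> (norm (x k - xs)) (Lk k) (\<tau> k) (\<epsilon> k)"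
      by (rule est[OF lrs])
    define S where "S = r\<^sup>2 * (\<tau> k * Lk k + LF\<^sup>2 * r\<^sup>2 / 4) + 2 * \<tau> k * \<epsilon> k"
    have "S = (r\<^sup>2)\<^sup>2 * (c1 * Lk k + LF\<^sup>2 / 4 + 2 * c1 * c2)"
      using C by (simp add: S_def r_def algebra_simps power2_eq_square)
    also have "\<dots> \<le> (r\<^sup>2)\<^sup>2 * Q"
      unfolding Q_def using C Lkb[of k] by (intro mult_left_mono) auto
    finally have "sqrt S \<le> sqrt ((r\<^sup>2)\<^sup>2 * Q)" by (rule real_sqrt_le_mono)
    also have "\<dots> = r\<^sup>2 * sqrt Q" by (simp only: real_sqrt_mult real_sqrt_abs abs_power2)
    finally have sS: "sqrt S \<le> r\<^sup>2 * sqrt Q" .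
    have "3 * LF * r\<^sup>2 / 2 + sqrt S \<le> r * (r * B) - LF * r\<^sup>2"
      using sS by (simp add: B_def algebra_simps power2_eq_square)
    also have "\<dots> \<le> r * \<sigma> - LF * r\<^sup>2"
      using rB2 r0 by (simp add: mult_left_mono)
    also have "\<dots> = r * (\<sigma> - LF * r)" by (simp add: algebra_simps power2_eq_square)
    finally have "(3 * LF * r\<^sup>2 / 2 + sqrt S) / (\<sigma> - LF * r) \<le> r"
      using D0 by (simp add: pos_divide_le_eq mult.commute)
    then have mb: "mid_bound LF \<sigma> (norm (x k - xs)) (Lk k) (\<tau> k) (\<epsilon> k) \<le> norm (x k - xs)"
      unfolding mid_bound_def S_def r_def .
    show "norm (x (Suc k) - xs) \<le> mid_bound LF \<sigma> (norm (x k - xs)) (Lk k) (\<tau> k) (\<epsilon> k)" by (rule ek)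
    show "mid_bound LF \<sigma> (norm (x k - xs)) (Lk k) (\<tau> k) (\<epsilon> k) \<le> norm (x k - xs)" by (rule mb)
    show "norm (x (Suc k) - xs) \<le> norm (x k - xs)" using ek mb by linarith
    show "x (Suc k) \<in> level F (fhat1 F x0)" by (rule lev)
  qed
qed

end
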